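(* Let $1\le N\le3$, $a,c>0$, $1\le q<2$, $2+\frac8N<p<2^*$, and let $h\in L^{\frac{p}{p-q}}(\mathbb{R}^N)\cap C^1(\mathbb{R}^N)$ with $h\ge0$ and $\langle\nabla h,x\rangle\in L^{\frac{2}{2-q}}(\mathbb{R}^N)$. Assume $$\|h\|_{\frac{p}{p-q}}<\frac{aq(p\gamma_p-2)}{2\mathcal{C}_{N,p}^{q}\gamma_p(p-q)}\left(\frac{ap(2-q\gamma_p)}{2\gamma_p(p-q)\mathcal{C}_{N,p}^{p}}\right)^{\frac{2-q\gamma_p}{p\gamma_p-2}}c^{-\frac{(1-\gamma_p)(p-q)}{p\gamma_p-2}}.$$ Define $\varphi:(0,\infty)\to\mathbb{R}$ by $$\varphi(t):=\frac a2t^2-\frac1p\mathcal{C}_{N,p}^pc^{\frac{p-p\gamma_p}{2}}t^{p\gamma_p}-\frac1q\mathcal{C}_{N,p}^qc^{\frac{q(1-\gamma_p)}{2}}\|h\|_{\frac{p}{p-q}}t^{q\gamma_p}.$$ Then $\varphi$ has a local strict minimum at a negative level and a global strict maximum at a positive level. Moreover, there exist $0<R_1<R_2$, depending on $c$, such that $\varphi(R_1)=0=\varphi(R_2)$ and $\varphi(t)>0$ if and only if $t\in(R_1,R_2)$.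
   Context: $2^*=6$ if $N=3$, $2^*=+\infty$ if $N=1,2$. $\gamma_p:=\frac{N(p-2)}{2p}$, and $\mathcal{C}_{N,p}$ is the constant in the Gagliardo–Nirenberg inequality $\|u\|_p\le\mathcal{C}_{N,p}\|\nabla u\|_2^{\gamma_p}\|u\|_2^{1-\gamma_p}$ on $H^1(\mathbb{R}^N)$. *)

theory Defs
  imports "HOL-Analysis.Analysis"
begin

definition in_Lp :: "real \<Rightarrow> ('a::euclidean_space \<Rightarrow> real) \<Rightarrow> bool" where
  "in_Lp r f \<longleftrightarrow> f \<in> borel_measurable lborel \<and> integrable lborel (\<lambda>x. \<bar>f x\<bar> powr r)"

definition Lp_norm :: "real \<Rightarrow> ('a::euclidean_space \<Rightarrow> real) \<Rightarrow> real" where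
  "Lp_norm r f = (\<integral>x. \<bar>f x\<bar> powr r \<partial>lborel) powr (1 / r)"

definition C1c_grad :: "('a::euclidean_space \<Rightarrow> real) \<Rightarrow> ('a \<Rightarrow> 'a) \<Rightarrow> bool" where
  "C1c_grad \<phi> g \<longleftrightarrow> continuous_on UNIV g \<and>
     (\<forall>x. (\<phi> has_derivative (\<lambda>v. g x \<bullet> v)) (at x)) \<and>
     compact (closure {x. \<phi> x \<noteq> 0})"

definition H1_weak_grad :: "('a::euclidean_space \<Rightarrow> real) \<Rightarrow> ('a \<Rightarrow> 'a) \<Rightarrow> bool" where
  "H1_weak_grad u g \<longleftrightarrow> in_Lp 2 u \<and> g \<in> borel_measurable lborel \<and>
     (\<forall>i\<in>Basis. in_Lp 2 (\<lambda>x. g x \<bullet> i)) \<and>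
     (\<forall>\<phi> d\<phi>. C1c_grad \<phi> d\<phi> \<longrightarrow>
        (\<forall>i\<in>Basis. (\<integral>x. u x * (d\<phi> x \<bullet> i) \<partial>lborel) = - (\<integral>x. (g x \<bullet> i) * \<phi> x \<partial>lborel)))"

definition gamma_p :: "nat \<Rightarrow> real \<Rightarrow> real" where
  "gamma_p N p = real N * (p - 2) / (2 * p)"

definition GN_const :: "'n::finite itself \<Rightarrow> real \<Rightarrow> real" where
  "GN_const _ p = Inf {C. C \<ge> 0 \<and>
     (\<forall>(u :: real^'n \<Rightarrow> real) g. H1_weak_grad u g \<longrightarrow>
        Lp_norm p u \<le> C * Lp_norm 2 (\<lambda>x. norm (g x)) powr (gamma_p CARD('n) p)
                         * Lp_norm 2 u powr (1 - gamma_p CARD('n) p))}"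

end

theory Submission
  imports Defs
begin


lemma unimodal:
  fixes P Q \<mu> \<nu> :: real
  assumes P: "P > 0" and Q: "Q > 0" and mu: "0 < \<mu>" "\<mu> < \<nu>"
  defines "u \<equiv> \<lambda>t. P * t powr \<mu> - Q * t powr \<nu>"
  defines "ts \<equiv> (\<mu>*P/(\<nu>*Q)) powr (1/(\<nu>-\<mu>))"
  shows "ts > 0"
    and "\<And>x y. 0<x \<Longrightarrow> x<y \<Longrightarrow> y \<le> ts \<Longrightarrow> u x < u y"
    and "\<And>x y. ts \<le> x \<Longrightarrow> x < y \<Longrightarrow> u y < u x"
    and "\<And>x y. 0 < x \<Longrightarrow> continuous_on {x..y} u"
proof -
  have nu: "\<nu> > 0" using mu by linarith
  have K: "\<mu>*P/(\<nu>*Q) > 0" using P Q mu nu by simp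
  show tsp: "ts > 0" unfolding ts_def using K P Q mu nu by simp
  have tsK: "ts powr (\<nu>-\<mu>) = \<mu>*P/(\<nu>*Q)"
    unfolding ts_def using K P Q mu nu by (simp add: powr_powr)
  have der: "DERIV u z :> P*(\<mu> * z powr (\<mu>-1)) - Q*(\<nu> * z powr (\<nu>-1))" if "z > 0" for z
    unfolding u_def
    by (intro DERIV_diff DERIV_cmult has_real_derivative_powr that)
  have split: "P*(\<mu> * z powr (\<mu>-1)) - Q*(\<nu> * z powr (\<nu>-1))
      = z powr (\<mu>-1) * (\<nu>*Q) * (\<mu>*P/(\<nu>*Q) - z powr (\<nu>-\<mu>))" if "z > 0" for z
  proof -
    have "z powr (\<nu>-1) = z powr (\<mu>-1) * z powr (\<nu>-\<mu>)"
      using that by (simp add: powr_add[symmetric])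
    then show ?thesis using Q nu by (simp add: field_simps)
  qed
  show cont: "continuous_on {x..y} u" if "0 < x" for x y
    apply (rule DERIV_continuous_on)
    apply (rule has_field_derivative_at_within)
    apply (rule der) using that by auto
  show "u x < u y" if "0<x" "x<y" "y \<le> ts" for x y
  proof (rule DERIV_pos_imp_increasing_open[OF \<open>x<y\<close> _ cont[OF \<open>0<x\<close>]])
    fix z assume z: "x < z" "z < y"
    have "z powr (\<nu>-\<mu>) < ts powr (\<nu>-\<mu>)"
      using z that mu by (intro powr_less_mono2) auto
    then have "0 < z powr (\<mu>-1) * (\<nu>*Q) * (\<mu>*P/(\<nu>*Q) - z powr (\<nu>-\<mu>))"
      using tsK z that Q nu by (intro mult_pos_pos) auto
    then show "\<exists>y. DERIV u z :> y \<and> y > 0"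
      using der[of z] split[of z] z that by auto
  qed
  show "u y < u x" if "ts \<le> x" "x<y" for x y
  proof (rule DERIV_neg_imp_decreasing_open[OF \<open>x<y\<close> _ cont])
    show "0 < x" using that tsp by linarith
    fix z assume z: "x < z" "z < y"
    have "ts powr (\<nu>-\<mu>) < z powr (\<nu>-\<mu>)"
      using z that mu tsp by (intro powr_less_mono2) auto
    then have "0 < z powr (\<mu>-1) * (\<nu>*Q) * (z powr (\<nu>-\<mu>) - \<mu>*P/(\<nu>*Q))"
      using tsK z that Q nu tsp by (intro mult_pos_pos) auto
    then have "z powr (\<mu>-1) * (\<nu>*Q) * (\<mu>*P/(\<nu>*Q) - z powr (\<nu>-\<mu>)) < 0"
      by (simp add: algebra_simps)
    then show "\<exists>y. DERIV u z :> y \<and> y < 0"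
      using der[of z] split[of z] z that tsp by auto
  qed
qed

lemma unimodal_level:
  fixes P Q \<mu> \<nu> L :: real
  assumes P: "P > 0" and Q: "Q > 0" and mu: "0 < \<mu>" "\<mu> < \<nu>" and L: "L > 0"
    and ex: "\<exists>t>0. P * t powr \<mu> - Q * t powr \<nu> > L"
  obtains r1 r2 where "0 < r1" "r1 < r2" "P * r1 powr \<mu> - Q * r1 powr \<nu> = L"
     "P * r2 powr \<mu> - Q * r2 powr \<nu> = L"
     "\<forall>t>0. L < P * t powr \<mu> - Q * t powr \<nu> \<longleftrightarrow> r1 < t \<and> t < r2"
     "\<forall>t>0. t < r1 \<longrightarrow> P * t powr \<mu> - Q * t powr \<nu> < L"
     "\<forall>t>r2. P * t powr \<mu> - Q * t powr \<nu> < L"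
proof -
  define u where "u = (\<lambda>t. P * t powr \<mu> - Q * t powr \<nu>)"
  define ts where "ts = (\<mu>*P/(\<nu>*Q)) powr (1/(\<nu>-\<mu>))"
  note U = unimodal[OF P Q mu]
  have tsp: "ts > 0" unfolding u_def ts_def by (rule U(1))
  have inc: "u x < u y" if "0<x" "x<y" "y \<le> ts" for x y
    using U(2)[OF that[unfolded ts_def]] unfolding u_def by simp
  have dec: "u y < u x" if "ts \<le> x" "x<y" for x y
    using U(3)[OF that[unfolded ts_def]] unfolding u_def by simp
  have cont: "continuous_on {x..y} u" if "0 < x" for x y
    using U(4)[OF that] unfolding u_def by simp
  have le_ts: "u t \<le> u ts" if "t > 0" for t
  proof -
    consider "t < ts" | "t = ts" | "t > ts" by linarith
    then show ?thesis
    proof cases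
      case 1 then show ?thesis using inc[OF that 1] by simp
    next
      case 3 then show ?thesis using dec[of ts t] by simp
    qed simp
  qed
  obtain t0 where "t0 > 0" "u t0 > L" using ex unfolding u_def by auto
  with le_ts have uts: "u ts > L" by force
  define a0 where "a0 = min (ts/2) ((L/(2*P)) powr (1/\<mu>))"
  have a0p: "a0 > 0" using tsp L P unfolding a0_def by simp
  have a0ts: "a0 < ts" using tsp unfolding a0_def by simp
  have "a0 powr \<mu> \<le> ((L/(2*P)) powr (1/\<mu>)) powr \<mu>"
    using a0p mu unfolding a0_def by (intro powr_mono2) auto
  also have "\<dots> = L/(2*P)" using L P mu by (simp add: powr_powr)
  finally have "P * a0 powr \<mu> \<le> L/2" using P by (simp add: field_simps)
  moreover have "Q * a0 powr \<nu> \<ge> 0" using Q by simp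
  ultimately have ua0: "u a0 < L" unfolding u_def using L by linarith
  define b0 where "b0 = max (2*ts) ((P/Q) powr (1/(\<nu>-\<mu>)))"
  have b0ts: "b0 > ts" using tsp unfolding b0_def by simp
  have "b0 powr (\<nu>-\<mu>) \<ge> ((P/Q) powr (1/(\<nu>-\<mu>))) powr (\<nu>-\<mu>)"
    using mu P Q unfolding b0_def by (intro powr_mono2) auto
  also have "((P/Q) powr (1/(\<nu>-\<mu>))) powr (\<nu>-\<mu>) = P/Q" using P Q mu by (simp add: powr_powr)
  finally have "Q * b0 powr (\<nu>-\<mu>) \<ge> P" using Q by (simp add: field_simps)
  moreover have "b0 powr \<nu> = b0 powr \<mu> * b0 powr (\<nu>-\<mu>)"
    using b0ts tsp by (simp add: powr_add[symmetric])
  moreover have "b0 powr \<mu> \<ge> 0" by simp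
  ultimately have "u b0 = b0 powr \<mu> * (P - Q * b0 powr (\<nu>-\<mu>))" "P - Q * b0 powr (\<nu>-\<mu>) \<le> 0"
    unfolding u_def by (auto simp: algebra_simps)
  then have "u b0 \<le> 0" by (simp add: mult_nonneg_nonpos)
  then have ub0: "u b0 < L" using L by linarith
  obtain r1 where r1: "a0 \<le> r1" "r1 \<le> ts" "u r1 = L"
    using IVT'[of u a0 L ts] ua0 uts a0ts cont[OF a0p] by auto
  obtain r2 where r2: "ts \<le> r2" "r2 \<le> b0" "u r2 = L"
    using IVT2'[of u b0 L ts] ub0 uts b0ts cont[OF tsp] by auto
  have r1ts: "r1 < ts" using r1 uts by (cases "r1 = ts") auto
  have r2ts: "ts < r2" using r2 uts by (cases "r2 = ts") auto
  have r1p: "r1 > 0" using r1 a0p by linarith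
  have iff: "L < u t \<longleftrightarrow> r1 < t \<and> t < r2" if t: "t > 0" for t
  proof (cases "t \<le> r1")
    case True
    then have "u t \<le> u r1" using inc[OF t, of r1] r1ts by (cases "t = r1") auto
    then show ?thesis using True r1 by auto
  next
    case F1: False
    show ?thesis
    proof (cases "t \<le> ts")
      case True
      then have "u r1 < u t" using inc[OF r1p, of t] F1 by auto
      then show ?thesis using True F1 r1 r2ts by auto
    next
      case F2: False
      show ?thesis
      proof (cases "t < r2")
        case True
        then have "u r2 < u t" using dec[of t r2] F2 by auto
        then show ?thesis using True F1 r2 by auto
      next
        case False
        then have "u t \<le> u r2" using dec[of r2 t] r2 by (cases "t = r2") auto
        then show ?thesis using False r2 by auto
      qed
    qed
  qed
  have lt1: "u t < L" if "t > 0" "t < r1" for t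
    using inc[OF that] r1 r1ts by auto
  have lt2: "u t < L" if "t > r2" for t
    using dec[of r2 t] that r2 by auto
  show ?thesis
    apply (rule that[of r1 r2])
    using r1p r1ts r2ts r1 r2 iff lt1 lt2 unfolding u_def by auto
qed

lemma phi_main:
  fixes A B D \<alpha> \<beta> :: real
  assumes A: "A > 0" and B: "B > 0" and D: "D > 0"
    and be: "0 < \<beta>" "\<beta> < 2" and al: "2 < \<alpha>"
    and ex: "\<exists>t>0. A * t powr (2-\<beta>) - B * t powr (\<alpha>-\<beta>) > D"
  defines "\<phi> \<equiv> \<lambda>t. A*t\<^sup>2 - B*t powr \<alpha> - D*t powr \<beta>"
  shows "(\<exists>t0>0. \<phi> t0 < 0 \<and> (\<exists>\<delta>>0. \<forall>t. t > 0 \<and> \<bar>t - t0\<bar> < \<delta> \<and> t \<noteq> t0 \<longrightarrow> \<phi> t > \<phi> t0))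
       \<and> (\<exists>t1>0. \<phi> t1 > 0 \<and> (\<forall>t>0. t \<noteq> t1 \<longrightarrow> \<phi> t < \<phi> t1))
       \<and> (\<exists>R1 R2. 0 < R1 \<and> R1 < R2 \<and> \<phi> R1 = 0 \<and> \<phi> R2 = 0 \<and>
             (\<forall>t>0. \<phi> t > 0 \<longleftrightarrow> R1 < t \<and> t < R2))"
proof -
  define g where "g = (\<lambda>t. A * t powr (2-\<beta>) - B * t powr (\<alpha>-\<beta>))"
  define k where "k = (\<lambda>t. (2*A) * t powr (2-\<beta>) - (\<alpha>*B) * t powr (\<alpha>-\<beta>))"
  have mu: "0 < 2-\<beta>" "2-\<beta> < \<alpha>-\<beta>" using be al by auto
  have fac: "\<phi> t = t powr \<beta> * (g t - D)" if t: "t > 0" for t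
  proof -
    have "t\<^sup>2 = t powr (\<beta> + (2-\<beta>))" using t by simp
    also have "\<dots> = t powr \<beta> * t powr (2-\<beta>)" by (rule powr_add)
    finally have "t\<^sup>2 = t powr \<beta> * t powr (2-\<beta>)" .
    moreover have "t powr \<alpha> = t powr \<beta> * t powr (\<alpha>-\<beta>)"
      using t by (simp add: powr_add[symmetric])
    ultimately show ?thesis unfolding \<phi>_def g_def by (simp add: algebra_simps)
  qed
  have pos_iff: "\<phi> t > 0 \<longleftrightarrow> g t > D" if "t > 0" for t
    using fac[OF that] that by (simp add: zero_less_mult_iff)
  obtain R1 R2 where R: "0 < R1" "R1 < R2" "g R1 = D" "g R2 = D"
     "\<And>t. t>0 \<Longrightarrow> D < g t \<longleftrightarrow> R1 < t \<and> t < R2"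
  proof -
    obtain r1 r2 where X: "0 < r1" "r1 < r2" "A * r1 powr (2-\<beta>) - B * r1 powr (\<alpha>-\<beta>) = D"
     "A * r2 powr (2-\<beta>) - B * r2 powr (\<alpha>-\<beta>) = D"
     "\<forall>t>0. D < A * t powr (2-\<beta>) - B * t powr (\<alpha>-\<beta>) \<longleftrightarrow> r1 < t \<and> t < r2"
     "\<forall>t>0. t < r1 \<longrightarrow> A * t powr (2-\<beta>) - B * t powr (\<alpha>-\<beta>) < D"
     "\<forall>t>r2. A * t powr (2-\<beta>) - B * t powr (\<alpha>-\<beta>) < D"
      by (rule unimodal_level[OF A B mu D ex])
    show ?thesis by (rule that[of r1 r2]) (use X in \<open>simp_all add: g_def\<close>)
  qed
  have conc3: "\<exists>R1 R2. 0 < R1 \<and> R1 < R2 \<and> \<phi> R1 = 0 \<and> \<phi> R2 = 0 \<and>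
             (\<forall>t>0. \<phi> t > 0 \<longleftrightarrow> R1 < t \<and> t < R2)"
    apply (rule exI[of _ R1], rule exI[of _ R2])
    using R fac[of R1] fac[of R2] pos_iff by auto
  define dphi where "dphi = (\<lambda>t. A*(2*t) - B*(\<alpha> * t powr (\<alpha>-1)) - D*(\<beta> * t powr (\<beta>-1)))"
  have der: "DERIV \<phi> t :> dphi t" if "t > 0" for t
    unfolding \<phi>_def dphi_def
    by (intro DERIV_diff DERIV_cmult has_real_derivative_powr that)
       (auto intro!: derivative_eq_intros)
  have dfac: "dphi t = t powr (\<beta>-1) * (k t - \<beta>*D)" if t: "t > 0" for t
  proof -
    have "t powr (\<beta>-1) * t powr (2-\<beta>) = t"
      using t by (simp add: powr_add[symmetric])
    moreover have "t powr (\<beta>-1) * t powr (\<alpha>-\<beta>) = t powr (\<alpha>-1)"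
      using t by (simp add: powr_add[symmetric])
    ultimately show ?thesis unfolding dphi_def k_def by (simp add: algebra_simps)
  qed
  have cont: "continuous_on {x..y} \<phi>" if "0 < x" for x y
    apply (rule DERIV_continuous_on)
    apply (rule has_field_derivative_at_within)
    apply (rule der) using that by auto
  define t0 where "t0 = (D/A) powr (1/(2-\<beta>))"
  have t0p: "t0 > 0" using A D unfolding t0_def by simp
  have neg_small: "\<phi> t < 0" if "0 < t" "t < t0" for t
  proof -
    have "t powr (2-\<beta>) < t0 powr (2-\<beta>)"
      using that mu by (intro powr_less_mono2) auto
    also have "t0 powr (2-\<beta>) = D/A" unfolding t0_def using A D mu by (simp add: powr_powr)
    finally have "A * t powr (2-\<beta>) < D" using A by (simp add: field_simps)
    moreover have "B * t powr (\<alpha>-\<beta>) \<ge> 0" using B by simp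
    ultimately have "g t - D < 0" unfolding g_def by linarith
    then show ?thesis using fac[OF \<open>0<t\<close>] that by (simp add: mult_pos_neg)
  qed
  define tm where "tm = (R1+R2)/2"
  have tm: "tm > 0" "\<phi> tm > 0" using R pos_iff[of tm] unfolding tm_def by auto
  define e where "e = min tm t0 / 2"
  have e: "0 < e" "e < tm" "e < t0" using tm t0p unfolding e_def by auto
  obtain z where z: "e < z" "z < tm" "\<phi> tm - \<phi> e = (tm - e) * dphi z"
    using MVT2[OF \<open>e < tm\<close>, of \<phi> dphi] der e by auto
  have "dphi z > 0"
  proof -
    have "0 < (tm - e) * dphi z" using z(3) tm(2) neg_small[OF e(1) e(3)] by linarith
    then show ?thesis using e by (simp add: zero_less_mult_iff)
  qed
  then have kz: "k z > \<beta> * D" using dfac[of z] z e by (simp add: zero_less_mult_iff)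
  have Pk: "2*A > 0" "\<alpha>*B > 0" using A B al by auto
  have L2: "\<beta>*D > 0" using be D by simp
  have exk: "\<exists>t>0. (2*A) * t powr (2-\<beta>) - (\<alpha>*B) * t powr (\<alpha>-\<beta>) > \<beta>*D"
    using kz z e unfolding k_def by (intro exI[of _ z]) auto
  obtain s1 s2 where S: "0 < s1" "s1 < s2"
     "\<And>t. t>0 \<Longrightarrow> \<beta>*D < k t \<longleftrightarrow> s1 < t \<and> t < s2"
     "\<And>t. t>0 \<Longrightarrow> t < s1 \<Longrightarrow> k t < \<beta>*D" "\<And>t. t>s2 \<Longrightarrow> k t < \<beta>*D"
  proof -
    obtain r1 r2 where X: "0 < r1" "r1 < r2" "(2*A) * r1 powr (2-\<beta>) - (\<alpha>*B) * r1 powr (\<alpha>-\<beta>) = \<beta>*D"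
     "(2*A) * r2 powr (2-\<beta>) - (\<alpha>*B) * r2 powr (\<alpha>-\<beta>) = \<beta>*D"
     "\<forall>t>0. \<beta>*D < (2*A) * t powr (2-\<beta>) - (\<alpha>*B) * t powr (\<alpha>-\<beta>) \<longleftrightarrow> r1 < t \<and> t < r2"
     "\<forall>t>0. t < r1 \<longrightarrow> (2*A) * t powr (2-\<beta>) - (\<alpha>*B) * t powr (\<alpha>-\<beta>) < \<beta>*D"
     "\<forall>t>r2. (2*A) * t powr (2-\<beta>) - (\<alpha>*B) * t powr (\<alpha>-\<beta>) < \<beta>*D"
      by (rule unimodal_level[OF Pk mu L2 exk])
    show ?thesis by (rule that[of r1 r2]) (use X in \<open>simp_all add: k_def\<close>)
  qed
  have dpos: "dphi t > 0" if "s1 < t" "t < s2" for t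
  proof -
    have "t > 0" using S(1) that by linarith
    then show ?thesis using S(3)[of t] that dfac[of t] by simp
  qed
  have dneg: "dphi t < 0" if "0 < t" "t < s1 \<or> s2 < t" for t
  proof -
    have "k t < \<beta>*D" using S(4)[of t] S(5)[of t] that by auto
    then show ?thesis using that dfac[of t] by (simp add: mult_pos_neg)
  qed
  have dec1: "\<phi> y < \<phi> x" if "0<x" "x<y" "y\<le>s1" for x y
  proof (rule DERIV_neg_imp_decreasing_open[OF \<open>x<y\<close> _ cont[OF \<open>0<x\<close>]])
    fix z assume "x<z" "z<y" then show "\<exists>y. DERIV \<phi> z :> y \<and> y < 0"
      using der[of z] dneg[of z] that by auto
  qed
  have inc: "\<phi> x < \<phi> y" if "s1\<le>x" "x<y" "y\<le>s2" for x y
  proof (rule DERIV_pos_imp_increasing_open[OF \<open>x<y\<close> _ cont])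
    show "0 < x" using that S(1) by linarith
    fix z assume "x<z" "z<y" then show "\<exists>y. DERIV \<phi> z :> y \<and> y > 0"
      using der[of z] dpos[of z] that S(1) by auto
  qed
  have dec2: "\<phi> y < \<phi> x" if "s2\<le>x" "x<y" for x y
  proof (rule DERIV_neg_imp_decreasing_open[OF \<open>x<y\<close> _ cont])
    show "0 < x" using that S(1,2) by linarith
    fix z assume "x<z" "z<y" then show "\<exists>y. DERIV \<phi> z :> y \<and> y < 0"
      using der[of z] dneg[of z] that S(1,2) by auto
  qed
  have negs1: "\<phi> t < 0" if "0 < t" "t \<le> s1" for t
  proof -
    define t' where "t' = min t t0 / 2"
    have "0 < t'" "t' < t" "t' < t0" using that t0p unfolding t'_def by auto
    then show ?thesis using dec1[of t' t] neg_small[of t'] that by auto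
  qed
  have loc: "\<exists>\<delta>>0. \<forall>t. t > 0 \<and> \<bar>t - s1\<bar> < \<delta> \<and> t \<noteq> s1 \<longrightarrow> \<phi> t > \<phi> s1"
  proof -
    have "\<forall>t. t > 0 \<and> \<bar>t - s1\<bar> < s2 - s1 \<and> t \<noteq> s1 \<longrightarrow> \<phi> t > \<phi> s1"
    proof (intro allI impI)
      fix t assume t: "t > 0 \<and> \<bar>t - s1\<bar> < s2 - s1 \<and> t \<noteq> s1"
      show "\<phi> t > \<phi> s1"
      proof (cases "t < s1")
        case True then show ?thesis using dec1[of t s1] t by auto
      next
        case False then show ?thesis using inc[of s1 t] t by auto
      qed
    qed
    then show ?thesis using S(2) by (intro exI[of _ "s2 - s1"]) auto
  qed
  have conc1: "\<exists>t0>0. \<phi> t0 < 0 \<and> (\<exists>\<delta>>0. \<forall>t. t > 0 \<and> \<bar>t - t0\<bar> < \<delta> \<and> t \<noteq> t0 \<longrightarrow> \<phi> t > \<phi> t0)"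
    using S(1) negs1[of s1] loc by blast
  have phis2: "\<phi> s2 > 0"
  proof -
    consider "tm \<le> s1" | "s1 < tm" "tm < s2" | "tm = s2" | "tm > s2" by linarith
    then show ?thesis
    proof cases
      case 1 then show ?thesis using negs1[of tm] tm by auto
    next
      case 2 then show ?thesis using inc[of tm s2] tm by auto
    next
      case 3 then show ?thesis using tm by auto
    next
      case 4 then show ?thesis using dec2[of s2 tm] tm by auto
    qed
  qed
  have conc2: "\<exists>t1>0. \<phi> t1 > 0 \<and> (\<forall>t>0. t \<noteq> t1 \<longrightarrow> \<phi> t < \<phi> t1)"
  proof (intro exI[of _ s2] conjI allI impI)
    show "0 < s2" "\<phi> s2 > 0" using S phis2 by auto
    fix t assume t: "t > 0" "t \<noteq> s2"
    consider "t \<le> s1" | "s1 < t" "t < s2" | "t > s2" using t by linarith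
    then show "\<phi> t < \<phi> s2"
    proof cases
      case 1 then show ?thesis using negs1[of t] t phis2 by auto
    next
      case 2 then show ?thesis using inc[of t s2] by auto
    next
      case 3 then show ?thesis using dec2[of s2 t] by auto
    qed
  qed
  show ?thesis using conc1 conc2 conc3 by blast
qed

lemma Lp_norm_pos:
  fixes h :: "'a::euclidean_space \<Rightarrow> real"
  assumes r: "r > 0" and hLp: "in_Lp r h" and hc: "\<And>x. isCont h x" and nz: "h \<noteq> (\<lambda>_. 0)"
  shows "Lp_norm r h > 0"
proof -
  obtain x0 where x0: "h x0 \<noteq> 0" using nz by auto
  define v where "v = \<bar>h x0\<bar>"
  have v: "v > 0" using x0 unfolding v_def by simp
  obtain d where d: "d > 0" "\<forall>x. dist x x0 < d \<longrightarrow> dist (h x) (h x0) < v/2"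
    using hc[of x0] v unfolding continuous_at_eps_delta by (metis half_gt_zero)
  define m where "m = (v/2) powr r"
  have m: "m > 0" using v unfolding m_def by simp
  have le: "m * indicator (ball x0 d) x \<le> \<bar>h x\<bar> powr r" for x
  proof (cases "x \<in> ball x0 d")
    case True
    then have "dist x x0 < d" by (simp add: dist_commute)
    then have "dist (h x) (h x0) < v/2" using d by blast
    then have "v/2 \<le> \<bar>h x\<bar>" unfolding v_def dist_real_def by linarith
    then have "m \<le> \<bar>h x\<bar> powr r" unfolding m_def using v r by (intro powr_mono2) auto
    then show ?thesis using True by simp
  next
    case False then show ?thesis by simp
  qed
  have int1: "integrable lborel (\<lambda>x. m * indicator (ball x0 d) x :: real)"
    by (intro integrable_mult_right integrable_real_indicator) (use emeasure_lborel_ball_finite in auto)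
  have int2: "integrable lborel (\<lambda>x. \<bar>h x\<bar> powr r)" using hLp unfolding in_Lp_def by simp
  have "(\<integral>x. m * indicator (ball x0 d) x \<partial>lborel) \<le> (\<integral>x. \<bar>h x\<bar> powr r \<partial>lborel)"
    by (rule integral_mono[OF int1 int2 le])
  moreover have "(\<integral>x. m * indicator (ball x0 d) x \<partial>lborel) = m * measure lborel (ball x0 d)"
    by simp
  moreover have "m * measure lborel (ball x0 d) > 0" using m d content_ball_pos[of d x0] by simp
  ultimately have "(\<integral>x. \<bar>h x\<bar> powr r \<partial>lborel) > 0" by linarith
  then show ?thesis unfolding Lp_norm_def by simp
qed

theorem lemma3p4:
  fixes h :: "real^'n \<Rightarrow> real" and gh :: "real^'n \<Rightarrow> real^'n"
    and a c p q :: real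
  defines "\<gamma> \<equiv> gamma_p CARD('n) p"
    and "C \<equiv> GN_const TYPE('n) p"
    and "hn \<equiv> Lp_norm (p / (p - q)) h"
  defines "\<phi> \<equiv> (\<lambda>t::real. a / 2 * t\<^sup>2 - 1 / p * C powr p * c powr ((p - p * \<gamma>) / 2) * t powr (p * \<gamma>)
                  - 1 / q * C powr q * c powr (q * (1 - \<gamma>) / 2) * hn * t powr (q * \<gamma>))"
  assumes N: "CARD('n) \<le> 3"
    and a: "a > 0" and c: "c > 0"
    and q: "1 \<le> q" "q < 2"
    and p: "2 + 8 / real CARD('n) < p" "CARD('n) = 3 \<longrightarrow> p < 6"
    and hLp: "in_Lp (p / (p - q)) h"
    and hC1: "continuous_on UNIV gh" "\<forall>x. (h has_derivative (\<lambda>v. gh x \<bullet> v)) (at x)"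
    and hnn: "\<forall>x. h x \<ge> 0"
    and hnz: "h \<noteq> (\<lambda>_. 0)"
    and hgrad: "in_Lp (2 / (2 - q)) (\<lambda>x. gh x \<bullet> x)"
    and hsmall: "hn < a * q * (p * \<gamma> - 2) / (2 * C powr q * \<gamma> * (p - q))
        * (a * p * (2 - q * \<gamma>) / (2 * \<gamma> * (p - q) * C powr p)) powr ((2 - q * \<gamma>) / (p * \<gamma> - 2))
        * c powr (- ((1 - \<gamma>) * (p - q) / (p * \<gamma> - 2)))"
  shows "(\<exists>t0>0. \<phi> t0 < 0 \<and> (\<exists>\<delta>>0. \<forall>t. t > 0 \<and> \<bar>t - t0\<bar> < \<delta> \<and> t \<noteq> t0 \<longrightarrow> \<phi> t > \<phi> t0))
       \<and> (\<exists>t1>0. \<phi> t1 > 0 \<and> (\<forall>t>0. t \<noteq> t1 \<longrightarrow> \<phi> t < \<phi> t1))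
       \<and> (\<exists>R1 R2. 0 < R1 \<and> R1 < R2 \<and> \<phi> R1 = 0 \<and> \<phi> R2 = 0 \<and>
             (\<forall>t>0. \<phi> t > 0 \<longleftrightarrow> R1 < t \<and> t < R2))"
  proof -
  define N where "N = CARD('n)"
  have N0: "N > 0" unfolding N_def by simp
  have N3: "N \<le> 3" unfolding N_def by (rule N)
  have Nc: "N = 1 \<or> N = 2 \<or> N = 3" using N0 N3 by auto
  have pN: "2 + 8 / real N < p" using p(1) unfolding N_def .
  have p2: "p > 2"
  proof -
    have "8 / real N > 0" using N0 by simp
    then show ?thesis using pN by linarith
  qed
  have gdef: "\<gamma> = real N * (p-2) / (2*p)" unfolding \<gamma>_def gamma_p_def N_def ..
  have gam: "\<gamma> > 0 \<and> \<gamma> < 1 \<and> p*\<gamma> > 2"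
  proof -
    consider "N = 1" | "N = 2" | "N = 3" using Nc by blast
    then show ?thesis
    proof cases
      case 1
      then have "p > 10" using pN by simp
      then show ?thesis unfolding gdef 1 using p2 by (simp add: field_simps)
    next
      case 2
      then have "p > 6" using pN by simp
      then show ?thesis unfolding gdef 2 using p2 by (simp add: field_simps)
    next
      case 3
      then have "p > 14/3" "p < 6" using pN p(2) unfolding N_def by simp_all
      then show ?thesis unfolding gdef 3 using p2 by (simp add: field_simps)
    qed
  qed
  have g0: "\<gamma> > 0" and g1: "\<gamma> < 1" and pg: "p*\<gamma> > 2" using gam by auto
  have pq: "p > q" using p2 q by linarith
  have qg0: "q*\<gamma> > 0" using q g0 by simp
  have qg2: "q*\<gamma> < 2"
  proof -
    have "q*\<gamma> < 2*\<gamma>" using q g0 by simp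
    then show ?thesis using g1 by linarith
  qed
  have r: "p/(p-q) > 0" using pq p2 by simp
  have hc: "isCont h x" for x
    using hC1(2) has_derivative_continuous by blast
  have hnp: "hn > 0" unfolding hn_def by (rule Lp_norm_pos[OF r hLp hc hnz])
  have C0: "C \<noteq> 0"
  proof
    assume "C = 0"
    then have "hn < 0" using hsmall by simp
    then show False using hnp by simp
  qed
  have Cp: "C powr p > 0" and Cq: "C powr q > 0" using C0 by auto
  define A where "A = a/2"
  define B where "B = 1 / p * C powr p * c powr ((p - p * \<gamma>) / 2)"
  define D where "D = 1 / q * C powr q * c powr (q * (1 - \<gamma>) / 2) * hn"
  have A0: "A > 0" using a unfolding A_def by simp
  have B0: "B > 0" using p2 Cp c unfolding B_def by simp
  have D0: "D > 0" using q Cq c hnp unfolding D_def by simp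
  define X where "X = a * p * (2 - q * \<gamma>) / (2 * \<gamma> * (p - q) * C powr p)"
  define e where "e = (2 - q * \<gamma>) / (p * \<gamma> - 2)"
  define E where "E = (1 - \<gamma>) * (p - q) / (p * \<gamma> - 2)"
  have X0: "X > 0" unfolding X_def using a p2 qg2 g0 pq Cp by simp
  have hs: "hn < a * q * (p * \<gamma> - 2) / (2 * C powr q * \<gamma> * (p - q)) * X powr e * c powr (- E)"
    using hsmall unfolding X_def e_def E_def by simp
  define K where "K = (2 - q*\<gamma>) * A / ((p*\<gamma> - q*\<gamma>) * B)"
  have nu: "p*\<gamma> - q*\<gamma> = \<gamma>*(p-q)" by (simp add: algebra_simps)
  have KX: "K = X * c powr (- ((p - p * \<gamma>) / 2))"
    unfolding K_def X_def A_def B_def nu powr_minus using c Cp g0 pq p2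
    by (simp add: field_simps)
  have K0: "K > 0" using KX X0 c by simp
  define ts where "ts = K powr (1/(p*\<gamma>-2))"
  have ts0: "ts > 0" unfolding ts_def using K0 by simp
  have tsK: "ts powr (p*\<gamma>-2) = K" unfolding ts_def using K0 pg by (simp add: powr_powr)
  have tsnu: "ts powr (p*\<gamma> - q*\<gamma>) = ts powr (2 - q*\<gamma>) * K"
  proof -
    have "ts powr (p*\<gamma> - q*\<gamma>) = ts powr ((2 - q*\<gamma>) + (p*\<gamma>-2))" by simp
    also have "\<dots> = ts powr (2 - q*\<gamma>) * K" by (simp only: powr_add tsK)
    finally show ?thesis .
  qed
  have ABK: "A - B*K = A * (p*\<gamma>-2) / (\<gamma>*(p-q))"
    unfolding K_def nu using B0 g0 pq by (simp add: field_simps)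
  have tsmu: "ts powr (2 - q*\<gamma>) = X powr e * c powr (- ((p - p * \<gamma>) / 2) * e)"
  proof -
    have "ts powr (2 - q*\<gamma>) = K powr e" unfolding ts_def e_def using K0 by (simp add: powr_powr)
    also have "\<dots> = X powr e * (c powr (- ((p - p * \<gamma>) / 2))) powr e"
      unfolding KX using X0 c by (simp add: powr_mult)
    also have "\<dots> = X powr e * c powr (- ((p - p * \<gamma>) / 2) * e)"
      using c by (simp add: powr_powr)
    finally show ?thesis .
  qed
  have gts: "A * ts powr (2 - q*\<gamma>) - B * ts powr (p*\<gamma> - q*\<gamma>)
      = X powr e * c powr (- ((p - p * \<gamma>) / 2) * e) * (A * (p*\<gamma>-2) / (\<gamma>*(p-q)))"
  proof -
    have "A * ts powr (2 - q*\<gamma>) - B * ts powr (p*\<gamma> - q*\<gamma>) = ts powr (2 - q*\<gamma>) * (A - B*K)"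
      unfolding tsnu by (simp add: algebra_simps)
    then show ?thesis unfolding ABK tsmu .
  qed
  have expid: "q * (1 - \<gamma>) / 2 + - E = - ((p - p * \<gamma>) / 2) * e"
  proof -
    have "p*\<gamma> - 2 \<noteq> 0" using pg by simp
    then show ?thesis unfolding E_def e_def by (simp add: field_simps)
  qed
  define M where "M = 1 / q * C powr q * c powr (q * (1 - \<gamma>) / 2)"
  have M0: "M > 0" unfolding M_def using q Cq c by simp
  have "D = M * hn" unfolding D_def M_def by simp
  also have "\<dots> < M * (a * q * (p * \<gamma> - 2) / (2 * C powr q * \<gamma> * (p - q)) * X powr e * c powr (- E))"
    using mult_strict_left_mono[OF hs M0] .
  also have "\<dots> = X powr e * (c powr (q * (1 - \<gamma>) / 2) * c powr (- E)) * (A * (p*\<gamma>-2) / (\<gamma>*(p-q)))"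
    unfolding M_def A_def using q Cq g0 pq by (simp add: field_simps)
  also have "\<dots> = A * ts powr (2 - q*\<gamma>) - B * ts powr (p*\<gamma> - q*\<gamma>)"
    unfolding gts powr_add[symmetric] expid ..
  finally have ex: "\<exists>t>0. A * t powr (2 - q*\<gamma>) - B * t powr (p*\<gamma> - q*\<gamma>) > D"
    using ts0 by blast
  note main = phi_main[OF A0 B0 D0 qg0 qg2 pg ex]
  show ?thesis using main unfolding \<phi>_def A_def B_def D_def .
qed

end
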